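(* Let $l,t,s,n$ be integers with $n\geq 2s+1$, $2\leq l\leq t$ and $s\geq l+1$. Then $$ex(n,\{K_{l,t},M_{s+1}\},l-1)\leq (l-1)n+ex(2(s-l+1)+1,K_{l,t})-\frac{l(l-1)}{2}.$$
   Context: All graphs are finite and simple. $ex(m,K_{l,t})$ is the maximum number of edges of an $m$-vertex graph with no copy of the complete bipartite graph $K_{l,t}$; $M_{s+1}$ is the matching of $s+1$ disjoint edges. For a graph $G$ with matching number at most $s$, say $X\subseteq V(G)$ is admissible if $|X|+\sum_{i=1}^m\lfloor |V(C_i)|/2\rfloor\leq s$, where $C_1,\dots,C_m$ are the components of $G-X$; let $x(G)$ be the maximum size of an admissible set. Let $\mathscr{G}_x$ be the set of graphs on $n$ vertices containing neither $K_{l,t}$ nor $M_{s+1}$ as a subgraph and with $x(G)=x$, and $ex(n,\{K_{l,t},M_{s+1}\},x)=\max_{G\in\mathscr{G}_x}e(G)$. *)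

theory Defs
  imports Main
begin

definition simple_graph :: "'a set \<Rightarrow> 'a set set \<Rightarrow> bool" where
  "simple_graph V E \<longleftrightarrow> finite V \<and> (\<forall>e\<in>E. e \<subseteq> V \<and> card e = 2)"

definition contains_Klt :: "'a set \<Rightarrow> 'a set set \<Rightarrow> nat \<Rightarrow> nat \<Rightarrow> bool" where
  "contains_Klt V E l t \<longleftrightarrow>
     (\<exists>A B. A \<subseteq> V \<and> B \<subseteq> V \<and> A \<inter> B = {} \<and> card A = l \<and> card B = t \<and>
            (\<forall>a\<in>A. \<forall>b\<in>B. {a, b} \<in> E))"

definition contains_matching :: "'a set set \<Rightarrow> nat \<Rightarrow> bool" where
  "contains_matching E k \<longleftrightarrow>
     (\<exists>M. M \<subseteq> E \<and> finite M \<and> card M = k \<and> (\<forall>e\<in>M. \<forall>f\<in>M. e \<noteq> f \<longrightarrow> e \<inter> f = {}))"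

definition adj_minus :: "'a set \<Rightarrow> 'a set set \<Rightarrow> 'a set \<Rightarrow> ('a \<times> 'a) set" where
  "adj_minus V E X = {(a, b). a \<in> V - X \<and> b \<in> V - X \<and> {a, b} \<in> E}"

definition component :: "'a set \<Rightarrow> 'a set set \<Rightarrow> 'a set \<Rightarrow> 'a \<Rightarrow> 'a set" where
  "component V E X v = {u. (v, u) \<in> (adj_minus V E X)\<^sup>*}"

definition components :: "'a set \<Rightarrow> 'a set set \<Rightarrow> 'a set \<Rightarrow> 'a set set" where
  "components V E X = component V E X ` (V - X)"

definition admissible :: "'a set \<Rightarrow> 'a set set \<Rightarrow> nat \<Rightarrow> 'a set \<Rightarrow> bool" where
  "admissible V E s X \<longleftrightarrow>
     X \<subseteq> V \<and> card X + (\<Sum>C\<in>components V E X. card C div 2) \<le> s"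

definition xG :: "'a set \<Rightarrow> 'a set set \<Rightarrow> nat \<Rightarrow> nat" where
  "xG V E s = Max {card X | X. admissible V E s X}"

definition ex_Klt :: "nat \<Rightarrow> nat \<Rightarrow> nat \<Rightarrow> nat" where
  "ex_Klt m l t = Max {card E | E. simple_graph {0..<m} E \<and> \<not> contains_Klt {0..<m} E l t}"

end

theory Submission
  imports Defs
begin


lemma adj_sym: "(a,b) \<in> adj_minus V E X \<Longrightarrow> (b,a) \<in> adj_minus V E X"
  unfolding adj_minus_def by (auto simp: insert_commute)

lemma rt_sym: "(a,b) \<in> (adj_minus V E X)\<^sup>* \<Longrightarrow> (b,a) \<in> (adj_minus V E X)\<^sup>*"
proof (induction rule: rtrancl_induct)
  case base then show ?case by simp
next
  case (step y z)
  have "(z,y) \<in> adj_minus V E X" using step(2) by (rule adj_sym)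
  then show ?case using step(3) by (rule converse_rtrancl_into_rtrancl)
qed

lemma rt_in: "(a,b) \<in> (adj_minus V E X)\<^sup>* \<Longrightarrow> a \<in> V - X \<Longrightarrow> b \<in> V - X"
  by (induction rule: rtrancl_induct) (auto simp: adj_minus_def)

lemma comp_self: "v \<in> component V E X v"
  unfolding component_def by simp

lemma comp_sub: "v \<in> V - X \<Longrightarrow> component V E X v \<subseteq> V - X"
proof
  fix u assume "v \<in> V - X" "u \<in> component V E X v"
  then show "u \<in> V - X" unfolding component_def using rt_in[of v u V E X] by simp
qed

lemma comp_eq: "u \<in> component V E X v \<Longrightarrow> component V E X u = component V E X v"
proof -
  assume "u \<in> component V E X v"
  then have uv: "(v,u) \<in> (adj_minus V E X)\<^sup>*" unfolding component_def by simp
  then have vu: "(u,v) \<in> (adj_minus V E X)\<^sup>*" by (rule rt_sym)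
  show ?thesis unfolding component_def
  proof (intro set_eqI iffI; simp)
    fix w assume "(u,w) \<in> (adj_minus V E X)\<^sup>*"
    then show "(v,w) \<in> (adj_minus V E X)\<^sup>*" using uv by simp
  next
    fix w assume "(v,w) \<in> (adj_minus V E X)\<^sup>*"
    then show "(u,w) \<in> (adj_minus V E X)\<^sup>*" using vu by simp
  qed
qed

lemma comp_disj: "w \<in> component V E X u \<Longrightarrow> w \<in> component V E X v \<Longrightarrow> component V E X u = component V E X v"
proof -
  assume a: "w \<in> component V E X u" "w \<in> component V E X v"
  have "component V E X w = component V E X u" using a(1) by (rule comp_eq)
  moreover have "component V E X w = component V E X v" using a(2) by (rule comp_eq)
  ultimately show ?thesis by simp
qed

lemma comp_edge: "{a,b} \<in> E \<Longrightarrow> a \<in> V - X \<Longrightarrow> b \<in> V - X \<Longrightarrow> b \<in> component V E X a"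
  unfolding component_def adj_minus_def by auto

lemma comp_edge_eq: "{a,b} \<in> E \<Longrightarrow> a \<in> V - X \<Longrightarrow> b \<in> V - X \<Longrightarrow> component V E X b = component V E X a"
  by (rule comp_eq, rule comp_edge)

lemma comps_finite: "finite V \<Longrightarrow> finite (components V E X)"
  unfolding components_def by simp

lemma comp_finite: "finite V \<Longrightarrow> v \<in> V - X \<Longrightarrow> finite (component V E X v)"
  by (rule finite_subset[OF comp_sub], assumption, simp)

lemma comps_Union: "\<Union>(components V E X) = V - X"
proof
  show "\<Union>(components V E X) \<subseteq> V - X" unfolding components_def by (simp add: UN_subset_iff comp_sub)
  show "V - X \<subseteq> \<Union>(components V E X)"
  proof
    fix v assume v: "v \<in> V - X"
    have "component V E X v \<in> components V E X" unfolding components_def using v by (rule imageI)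
    then show "v \<in> \<Union>(components V E X)" using comp_self by (rule UnionI)
  qed
qed

lemma comps_disjoint: assumes "C \<in> components V E X" "D \<in> components V E X" "C \<noteq> D" shows "C \<inter> D = {}"
proof -
  from assms obtain u v where C: "C = component V E X u" and D: "D = component V E X v"
    unfolding components_def by (meson imageE)
  show "C \<inter> D = {}"
  proof (rule ccontr)
    assume "C \<inter> D \<noteq> {}"
    then obtain w where "w \<in> C" "w \<in> D" by blast
    then have "C = D" unfolding C D by (rule comp_disj)
    then show False using assms(3) by simp
  qed
qed

lemma comps_card: "finite V \<Longrightarrow> (\<Sum>C\<in>components V E X. card C) = card (V - X)"
proof -
  assume f: "finite V"
  have "card (\<Union>(components V E X)) = (\<Sum>C\<in>components V E X. card C)"
  proof (rule card_Union_disjoint)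
    show "pairwise disjnt (components V E X)"
      unfolding pairwise_def disjnt_def using comps_disjoint by metis
    show "\<And>C. C \<in> components V E X \<Longrightarrow> finite C"
      unfolding components_def using f comp_finite by (metis imageE)
  qed
  then show ?thesis unfolding comps_Union by (rule sym)
qed



definition matching :: "'a set \<Rightarrow> 'a set set \<Rightarrow> 'a set set \<Rightarrow> bool" where
  "matching V E M \<longleftrightarrow> M \<subseteq> E \<and> (\<forall>e\<in>M. e \<subseteq> V) \<and> (\<forall>e\<in>M. \<forall>f\<in>M. e \<noteq> f \<longrightarrow> e \<inter> f = {})"

definition nu :: "'a set \<Rightarrow> 'a set set \<Rightarrow> nat" where
  "nu V E = Max {card M | M. matching V E M}"

lemma matching_finite: "finite V \<Longrightarrow> matching V E M \<Longrightarrow> finite M"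
proof -
  assume "finite V" "matching V E M"
  then have "M \<subseteq> Pow V" unfolding matching_def by auto
  then show "finite M" using \<open>finite V\<close> by (meson finite_Pow_iff finite_subset)
qed

lemma nu_set_finite: "finite V \<Longrightarrow> finite {card M | M. matching V E M}"
proof -
  assume f: "finite V"
  have "{card M | M. matching V E M} \<subseteq> card ` Pow (Pow V)"
    unfolding matching_def by auto
  then show ?thesis using f by (meson finite_Pow_iff finite_imageI finite_subset)
qed

lemma matching_empty: "matching V E {}"
  unfolding matching_def by simp

lemma nu_ge: "finite V \<Longrightarrow> matching V E M \<Longrightarrow> card M \<le> nu V E"
  unfolding nu_def using nu_set_finite by (metis (mono_tags, lifting) Max_ge mem_Collect_eq)

lemma nu_attained: "finite V \<Longrightarrow> \<exists>M. matching V E M \<and> card M = nu V E"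
proof -
  assume f: "finite V"
  have "{card M | M. matching V E M} \<noteq> {}" using matching_empty by blast
  then have "nu V E \<in> {card M | M. matching V E M}"
    unfolding nu_def using Max_in nu_set_finite[OF f] by blast
  then show ?thesis by auto
qed

lemma card_Union_matching:
  assumes "finite V" "\<forall>e\<in>E. card e = 2" "matching V E M"
  shows "card (\<Union>M) = 2 * card M"
proof -
  have fin: "finite M" using assms matching_finite by blast
  have "card (\<Union>M) = (\<Sum>e\<in>M. card e)"
  proof (rule card_Union_disjoint)
    show "pairwise disjnt M" using assms(3) unfolding matching_def pairwise_def disjnt_def by simp
    fix e assume "e \<in> M"
    then have "card e = 2" using assms unfolding matching_def by blast
    then show "finite e" by (intro card_ge_0_finite) simp
  qed
  also have "\<dots> = (\<Sum>e\<in>M. 2)"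
    using assms unfolding matching_def by (intro sum.cong) auto
  finally show ?thesis by simp
qed

lemma matching_insert:
  assumes "matching V E M" "e \<in> E" "e \<subseteq> V" "\<forall>f\<in>M. f \<inter> e = {}"
  shows "matching V E (insert e M)"
proof -
  have "\<forall>f\<in>M. e \<inter> f = {}" using assms(4) by (simp add: Int_commute)
  then show ?thesis using assms unfolding matching_def by (simp add: Ball_def)
qed

lemma adj_irrefl:
  assumes "\<forall>e\<in>E. card e = 2" "(u,w) \<in> adj_minus V E X" shows "u \<noteq> w"
  using assms unfolding adj_minus_def by auto

lemma adj_edge: "(u,w) \<in> adj_minus V E X \<Longrightarrow> {u,w} \<in> E \<and> u \<in> V - X \<and> w \<in> V - X"
  unfolding adj_minus_def by auto



lemma card_diff_sym:
  assumes "finite A" "finite B" "card A = card B"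
  shows "card (A - B) = card (B - A)"
proof -
  have "card (A - B) = card A - card (A \<inter> B)" using assms by (simp add: card_Diff_subset_Int)
  moreover have "card (B - A) = card B - card (B \<inter> A)" using assms by (simp add: card_Diff_subset_Int)
  ultimately show ?thesis using assms(3) by (simp add: Int_commute)
qed

lemma two_elems_card:
  assumes "finite A" "u \<in> A" "v \<in> A" "u \<noteq> v" shows "2 \<le> card A"
proof -
  have "{u,v} \<subseteq> A" using assms by simp
  then have "card {u,v} \<le> card A" using card_mono[OF assms(1)] by blast
  then show ?thesis using assms(4) by simp
qed

lemma exists_other:
  assumes "finite A" "2 \<le> card A" shows "\<exists>x\<in>A. x \<noteq> w"
proof (rule ccontr)
  assume "\<not> (\<exists>x\<in>A. x \<noteq> w)"
  then have "A \<subseteq> {w}" by auto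
  then have "card A \<le> card {w}" using card_mono[of "{w}" A] by simp
  then show False using assms by simp
qed

lemma gallai_core:
  assumes fin: "finite V" and E2: "\<forall>e\<in>E. card e = 2"
    and avoid: "\<forall>x\<in>V. \<exists>N. matching V E N \<and> card N = nu V E \<and> x \<notin> \<Union>N"
    and P0: "\<exists>M u v. matching V E M \<and> card M = nu V E \<and> u \<noteq> v \<and> u \<notin> \<Union>M \<and> v \<notin> \<Union>M
                   \<and> (u,v) \<in> (adj_minus V E {}) ^^ k0"
  shows False
proof -
  let ?A = "adj_minus V E {}"
  define P where "P k \<longleftrightarrow> (\<exists>M u v. matching V E M \<and> card M = nu V E \<and> u \<noteq> v \<and> u \<notin> \<Union>M \<and> v \<notin> \<Union>M
                   \<and> (u,v) \<in> ?A ^^ k)" for k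
  have "\<exists>k. P k" using P0 unfolding P_def by blast
  then obtain k where Pk: "P k" and kmin: "\<And>j. j < k \<Longrightarrow> \<not> P j"
    using exists_least_iff[of P] by blast
  from Pk obtain M u v where M: "matching V E M" "card M = nu V E" and uv: "u \<noteq> v" "u \<notin> \<Union>M" "v \<notin> \<Union>M"
    and path: "(u,v) \<in> ?A ^^ k" unfolding P_def by blast
  have finM: "finite M" using fin M matching_finite by blast
  have no_adj: False if "matching V E N" "card N = nu V E" "a \<notin> \<Union>N" "b \<notin> \<Union>N" "(a,b) \<in> ?A" for N a b
  proof -
    have ab: "{a,b} \<in> E" "a \<in> V" "b \<in> V" using adj_edge[OF that(5)] by auto
    have "\<forall>f\<in>N. f \<inter> {a,b} = {}" using that(3,4) by auto
    then have m: "matching V E (insert {a,b} N)" using matching_insert[OF that(1) ab(1)] ab by simp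
    have "{a,b} \<notin> N" using that(3) by auto
    then have "card (insert {a,b} N) = Suc (nu V E)"
      using that(2) matching_finite[OF fin that(1)] by simp
    then show False using nu_ge[OF fin m] by simp
  qed
  show False
  proof (cases k)
    case 0
    then show False using path uv by simp
  next
    case (Suc k1)
    show False
    proof (cases k1)
      case 0
      then show False using no_adj[OF M uv(2,3)] path Suc by simp
    next
      case (Suc j)
      with \<open>k = Suc k1\<close> have kj: "k = Suc (Suc j)" by simp
      have "(u,v) \<in> ?A ^^ Suc (Suc j)" using path kj by simp
      then obtain w where uw: "(u,w) \<in> ?A" and wv: "(w,v) \<in> ?A ^^ Suc j"
        by (meson relpow_Suc_D2)
      have uw_ne: "u \<noteq> w" using adj_irrefl[OF E2 uw] .
      have wV: "w \<in> V" using adj_edge[OF uw] by simp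
      have w_cov: "w \<in> \<Union>M"
      proof (rule ccontr)
        assume "w \<notin> \<Union>M"
        then show False using no_adj[OF M uv(2) _ uw] by simp
      qed
      have wv_ne: "w \<noteq> v" using w_cov uv(3) by auto
      define S where "S = {N. matching V E N \<and> card N = nu V E \<and> w \<notin> \<Union>N}"
      obtain N0 where "N0 \<in> S" using avoid wV unfolding S_def by blast
      have bound: "\<forall>N. N \<in> S \<longrightarrow> card (M \<inter> N) < card M + 1"
        using finM by (simp add: card_mono less_Suc_eq_le)
      obtain N where NS: "N \<in> S" and Nmax: "\<And>N'. N' \<in> S \<Longrightarrow> card (M \<inter> N') \<le> card (M \<inter> N)"
        using ex_has_greatest_nat[of "\<lambda>N. N \<in> S" N0 "\<lambda>N. card (M \<inter> N)" "card M + 1"] \<open>N0 \<in> S\<close> bound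
        by blast
      have N: "matching V E N" "card N = nu V E" "w \<notin> \<Union>N" using NS unfolding S_def by auto
      have finN: "finite N" using fin N matching_finite by blast
      have u_covN: "u \<in> \<Union>N"
      proof (rule ccontr)
        assume "u \<notin> \<Union>N"
        then show False using no_adj[OF N(1,2) _ N(3) uw] by simp
      qed
      have v_covN: "v \<in> \<Union>N"
      proof (rule ccontr)
        assume vn: "v \<notin> \<Union>N"
        have "P (Suc j)" unfolding P_def using N(1,2) wv_ne N(3) vn wv by blast
        then show False using kmin kj by simp
      qed
      have UM: "card (\<Union>M) = 2 * nu V E" using card_Union_matching[OF fin E2 M(1)] M(2) by simp
      have UN: "card (\<Union>N) = 2 * nu V E" using card_Union_matching[OF fin E2 N(1)] N(2) by simp
      have fUM: "finite (\<Union>M)" using finM M(1) fin unfolding matching_def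
        by (meson Sup_le_iff finite_subset)
      have fUN: "finite (\<Union>N)" using finN N(1) fin unfolding matching_def
        by (meson Sup_le_iff finite_subset)
      have "2 \<le> card (\<Union>N - \<Union>M)"
        using two_elems_card[of "\<Union>N - \<Union>M" u v] fUN u_covN v_covN uv by simp
      then have "2 \<le> card (\<Union>M - \<Union>N)" using card_diff_sym[OF fUM fUN] UM UN by simp
      then obtain t where t: "t \<in> \<Union>M - \<Union>N" "t \<noteq> w"
        using exists_other[of "\<Union>M - \<Union>N" w] fUM by blast
      then obtain e where eM: "e \<in> M" and te: "t \<in> e" by blast
      have "card e = 2" using eM M(1) E2 unfolding matching_def by blast
      then obtain x y where "e = {x,y}" "x \<noteq> y" using card_2_iff by metis
      then obtain r where er: "e = {t,r}" and rt: "r \<noteq> t" using te by auto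
      have eE: "e \<in> E" and eV: "e \<subseteq> V" using eM M(1) unfolding matching_def by auto
      have tN: "t \<notin> \<Union>N" using t by simp
      have r_covN: "r \<in> \<Union>N"
      proof (rule ccontr)
        assume rn: "r \<notin> \<Union>N"
        have "(t,r) \<in> ?A" using eE eV er unfolding adj_minus_def by auto
        then show False using no_adj[OF N(1,2) tN rn] by simp
      qed
      then obtain f where fN: "f \<in> N" and rf: "r \<in> f" by blast
      have eN: "e \<notin> N" using tN er by auto
      have fM: "f \<notin> M"
      proof
        assume "f \<in> M"
        have "e \<inter> f \<noteq> {}" using er rf by auto
        then have "e = f" using M(1) eM \<open>f \<in> M\<close> unfolding matching_def by blast
        then show False using eN fN by simp
      qed
      define N' where "N' = insert e (N - {f})"
      have disj: "\<forall>g\<in>N - {f}. g \<inter> e = {}"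
      proof
        fix g assume g: "g \<in> N - {f}"
        have "t \<notin> g" using tN g by auto
        moreover have "r \<notin> g"
        proof
          assume "r \<in> g"
          then have "g \<inter> f \<noteq> {}" using rf by auto
          then show False using N(1) g fN unfolding matching_def by auto
        qed
        ultimately show "g \<inter> e = {}" using er by auto
      qed
      have mNf: "matching V E (N - {f})" using N(1) unfolding matching_def by auto
      have mN': "matching V E N'" unfolding N'_def using matching_insert[OF mNf eE eV disj] .
      have cN': "card N' = nu V E"
      proof -
        have "e \<notin> N - {f}" using eN by simp
        then have "card N' = Suc (card (N - {f}))" unfolding N'_def using finN by simp
        also have "\<dots> = card N" using finN fN by (metis card_Suc_Diff1)
        finally show ?thesis using N(2) by simp
      qed
      have wN': "w \<notin> \<Union>N'"
      proof -
        have "w \<noteq> r" using r_covN N(3) by auto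
        then have "w \<notin> e" using er t(2) by auto
        then show ?thesis unfolding N'_def using N(3) by auto
      qed
      have N'S: "N' \<in> S" unfolding S_def using mN' cN' wN' by simp
      have "M \<inter> N' = insert e (M \<inter> N)"
        unfolding N'_def using eM fM by auto
      moreover have "e \<notin> M \<inter> N" using eN by simp
      ultimately have "card (M \<inter> N') = Suc (card (M \<inter> N))" using finM by simp
      then show False using Nmax[OF N'S] by simp
    qed
  qed
qed



lemma one_missed:
  assumes fin: "finite V" and E2: "\<forall>e\<in>E. card e = 2"
    and avoid: "\<forall>x\<in>V. \<exists>N. matching V E N \<and> card N = nu V E \<and> x \<notin> \<Union>N"
    and M: "matching V E M" "card M = nu V E"
    and C: "C \<in> components V E {}" and uv: "u \<in> C" "v \<in> C" "u \<notin> \<Union>M" "v \<notin> \<Union>M"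
  shows "u = v"
proof (rule ccontr)
  assume ne: "u \<noteq> v"
  obtain x where Cx: "C = component V E {} x" using C unfolding components_def by auto
  have xu: "(x,u) \<in> (adj_minus V E {})\<^sup>*" using uv(1) Cx unfolding component_def by simp
  have xv: "(x,v) \<in> (adj_minus V E {})\<^sup>*" using uv(2) Cx unfolding component_def by simp
  have "(u,x) \<in> (adj_minus V E {})\<^sup>*" using xu by (rule rt_sym)
  then have "(u,v) \<in> (adj_minus V E {})\<^sup>*" using xv by simp
  then obtain k where "(u,v) \<in> (adj_minus V E {}) ^^ k" using rtrancl_power by blast
  then show False using gallai_core[OF fin E2 avoid, of k] M ne uv(3,4) by blast
qed

lemma case2:
  assumes fin: "finite V" and E2: "\<forall>e\<in>E. card e = 2"
    and avoid: "\<forall>x\<in>V. \<exists>N. matching V E N \<and> card N = nu V E \<and> x \<notin> \<Union>N"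
  shows "(\<Sum>C\<in>components V E {}. card C div 2) \<le> nu V E"
proof -
  obtain M where M: "matching V E M" "card M = nu V E" using nu_attained[OF fin] by blast
  have finM: "finite M" using fin M matching_finite by blast
  define MC where "MC C = {e\<in>M. e \<subseteq> C}" for C
  have edge_in: "e \<subseteq> component V E {} a" if eM: "e \<in> M" and ae: "a \<in> e" for e a
  proof -
    have "card e = 2" "e \<in> E" "e \<subseteq> V" using eM M(1) E2 unfolding matching_def by auto
    then obtain y z where "e = {y,z}" by (metis card_2_iff)
    then obtain b where eab: "e = {a,b}" using ae by auto
    have "{a,b} \<in> E" "a \<in> V - {}" "b \<in> V - {}" using eab \<open>e \<in> E\<close> \<open>e \<subseteq> V\<close> by auto
    then have "b \<in> component V E {} a" by (rule comp_edge)
    then show ?thesis using eab comp_self by auto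
  qed
  have part1: "card C div 2 \<le> card (MC C)" if C: "C \<in> components V E {}" for C
  proof -
    obtain x where Cx: "C = component V E {} x" and xV: "x \<in> V" using C unfolding components_def by auto
    have finC: "finite C" using comp_finite[OF fin, of x "{}" E] Cx xV by simp
    have cov: "C \<inter> \<Union>M = \<Union>(MC C)"
    proof
      show "C \<inter> \<Union>M \<subseteq> \<Union>(MC C)"
      proof
        fix a assume a: "a \<in> C \<inter> \<Union>M"
        then obtain e where e: "e \<in> M" "a \<in> e" by blast
        have "component V E {} a = C" using a Cx comp_eq by (metis IntD1)
        then have "e \<subseteq> C" using edge_in[OF e] by simp
        then show "a \<in> \<Union>(MC C)" unfolding MC_def using e by blast
      qed
      show "\<Union>(MC C) \<subseteq> C \<inter> \<Union>M" unfolding MC_def by blast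
    qed
    have mMC: "matching V E (MC C)" using M(1) unfolding matching_def MC_def by auto
    have c1: "card (\<Union>(MC C)) = 2 * card (MC C)" using card_Union_matching[OF fin E2 mMC] .
    have "card (C - \<Union>M) \<le> Suc 0"
      using one_missed[OF fin E2 avoid M C] finC by (subst card_le_Suc0_iff_eq) auto
    moreover have "card C = card (C \<inter> \<Union>M) + card (C - \<Union>M)"
      using finC by (rule card_Int_Diff)
    ultimately have "card C \<le> 2 * card (MC C) + 1" using cov c1 by simp
    then show ?thesis by simp
  qed
  have part2: "(\<Sum>C\<in>components V E {}. card (MC C)) = card M"
  proof -
    have "card (\<Union>C\<in>components V E {}. MC C) = (\<Sum>C\<in>components V E {}. card (MC C))"
    proof (rule card_UN_disjoint)
      show "finite (components V E {})" using comps_finite[OF fin] .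
      show "\<forall>C\<in>components V E {}. finite (MC C)" unfolding MC_def using finM by simp
      show "\<forall>C\<in>components V E {}. \<forall>D\<in>components V E {}. C \<noteq> D \<longrightarrow> MC C \<inter> MC D = {}"
      proof (intro ballI impI)
        fix C D assume CD: "C \<in> components V E {}" "D \<in> components V E {}" "C \<noteq> D"
        show "MC C \<inter> MC D = {}"
        proof (rule ccontr)
          assume "MC C \<inter> MC D \<noteq> {}"
          then obtain e where e: "e \<in> M" "e \<subseteq> C" "e \<subseteq> D" unfolding MC_def by blast
          have "card e = 2" using e M(1) E2 unfolding matching_def by auto
          then have "e \<noteq> {}" by auto
          then have "C \<inter> D \<noteq> {}" using e by blast
          then show False using comps_disjoint[OF CD] by simp
        qed
      qed
    qed
    moreover have "(\<Union>C\<in>components V E {}. MC C) = M"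
    proof
      show "(\<Union>C\<in>components V E {}. MC C) \<subseteq> M" unfolding MC_def by blast
      show "M \<subseteq> (\<Union>C\<in>components V E {}. MC C)"
      proof
        fix e assume e: "e \<in> M"
        have "card e = 2" "e \<subseteq> V" using e M(1) E2 unfolding matching_def by auto
        then obtain a where a: "a \<in> e" by (metis card_2_iff insertI1)
        then have aV: "a \<in> V - {}" using \<open>e \<subseteq> V\<close> by auto
        have "component V E {} a \<in> components V E {}" unfolding components_def using aV by (rule imageI)
        moreover have "e \<in> MC (component V E {} a)" unfolding MC_def using e edge_in[OF e a] by simp
        ultimately show "e \<in> (\<Union>C\<in>components V E {}. MC C)" by blast
      qed
    qed
    ultimately show ?thesis by simp
  qed
  have "(\<Sum>C\<in>components V E {}. card C div 2) \<le> (\<Sum>C\<in>components V E {}. card (MC C))"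
    using part1 by (rule sum_mono)
  then show ?thesis using part2 M(2) by simp
qed

lemma comps_remove: "components (V - {v}) E X = components V E (insert v X)"
proof -
  have a: "adj_minus (V - {v}) E X = adj_minus V E (insert v X)" unfolding adj_minus_def by auto
  have b: "(V - {v}) - X = V - insert v X" by auto
  show ?thesis unfolding components_def component_def a b ..
qed

lemma TB:
  assumes "finite V" "\<forall>e\<in>E. card e = 2"
  shows "\<exists>X\<subseteq>V. card X + (\<Sum>C\<in>components V E X. card C div 2) \<le> nu V E"
  using assms(1)
proof (induction V rule: finite_psubset_induct)
  case (psubset V)
  show ?case
  proof (cases "\<forall>x\<in>V. \<exists>N. matching V E N \<and> card N = nu V E \<and> x \<notin> \<Union>N")
    case True
    have "(\<Sum>C\<in>components V E {}. card C div 2) \<le> nu V E" using case2[OF psubset(1) assms(2) True] .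
    then show ?thesis by (intro exI[of _ "{}"]) simp
  next
    case False
    then obtain v where vV: "v \<in> V" and vcov0: "\<not> (\<exists>N. matching V E N \<and> card N = nu V E \<and> v \<notin> \<Union>N)" by auto
    have vcov: "v \<in> \<Union>N" if "matching V E N" "card N = nu V E" for N using vcov0 that by auto
    have fin': "finite (V - {v})" using psubset(1) by simp
    obtain N' where N': "matching (V - {v}) E N'" "card N' = nu (V - {v}) E" using nu_attained[OF fin'] by blast
    have mN: "matching V E N'" using N'(1) unfolding matching_def by auto
    have "v \<notin> \<Union>N'" using N'(1) unfolding matching_def by auto
    then have "card N' \<noteq> nu V E" using vcov[OF mN] by auto
    moreover have "card N' \<le> nu V E" using nu_ge[OF psubset(1) mN] .
    ultimately have lt: "nu (V - {v}) E < nu V E" using N'(2) by simp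
    have "V - {v} \<subset> V" using vV by auto
    then obtain X' where X': "X' \<subseteq> V - {v}" "card X' + (\<Sum>C\<in>components (V - {v}) E X'. card C div 2) \<le> nu (V - {v}) E"
      using psubset(2)[OF \<open>V - {v} \<subset> V\<close>] by (elim exE conjE) auto
    have finX': "finite X'" using X'(1) fin' by (rule finite_subset)
    have "v \<notin> X'" using X'(1) by auto
    then have "card (insert v X') = card X' + 1" using finX' by simp
    then have "card (insert v X') + (\<Sum>C\<in>components V E (insert v X'). card C div 2) \<le> nu V E"
      using X'(2) lt unfolding comps_remove by simp
    moreover have "insert v X' \<subseteq> V" using X'(1) vV by auto
    ultimately show ?thesis by (intro exI[of _ "insert v X'"]) simp
  qed
qed



lemma edges_meet:
  assumes fin: "finite V" and E2: "\<forall>e\<in>E. e \<subseteq> V \<and> card e = 2"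
  shows "X \<subseteq> V \<Longrightarrow> 2 * card {e\<in>E. e \<inter> X \<noteq> {}} + card X * (card X + 1) \<le> 2 * card X * card V"
proof -
  assume XV: "X \<subseteq> V"
  have finX: "finite X" using XV fin by (rule finite_subset)
  show ?thesis using finX XV
  proof (induction X rule: finite_induct)
    case empty
    then show ?case by simp
  next
    case (insert x F)
    let ?a = "card {e\<in>E. e \<inter> F \<noteq> {}}"
    let ?S2 = "{e\<in>E. x \<in> e \<and> e \<inter> F = {}}"
    have IH: "2 * ?a + card F * (card F + 1) \<le> 2 * card F * card V" using insert by simp
    have finE: "finite E"
    proof -
      have "E \<subseteq> Pow V" using E2 by auto
      then show ?thesis using fin by (meson finite_Pow_iff finite_subset)
    qed
    have sub: "{e\<in>E. e \<inter> insert x F \<noteq> {}} \<subseteq> {e\<in>E. e \<inter> F \<noteq> {}} \<union> ?S2" by auto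
    have S2sub: "?S2 \<subseteq> (\<lambda>v. {x,v}) ` (V - insert x F)"
    proof
      fix e assume e: "e \<in> ?S2"
      then have "card e = 2" "e \<subseteq> V" using E2 by auto
      then obtain p q where pq: "e = {p,q}" "p \<noteq> q" by (metis card_2_iff)
      have "x \<in> e" using e by simp
      then obtain v where ev: "e = {x,v}" "v \<noteq> x" using pq by auto
      have "v \<in> V" using ev \<open>e \<subseteq> V\<close> by auto
      moreover have "v \<notin> F" using e ev by auto
      ultimately show "e \<in> (\<lambda>v. {x,v}) ` (V - insert x F)" using ev by auto
    qed
    have b: "card ?S2 \<le> card (V - insert x F)"
      using card_mono[OF finite_imageI[OF finite_Diff[OF fin]] S2sub] card_image_le[OF finite_Diff[OF fin]]
      by (meson le_trans)
    have cV: "card (V - insert x F) = card V - Suc (card F)"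
      using insert by (simp add: card_Diff_subset)
    have le: "Suc (card F) \<le> card V" using insert card_mono[OF fin insert(4)] by simp
    have "card {e\<in>E. e \<inter> insert x F \<noteq> {}} \<le> card ({e\<in>E. e \<inter> F \<noteq> {}} \<union> ?S2)"
      using sub finE by (intro card_mono) auto
    also have "\<dots> \<le> ?a + card ?S2" by (rule card_Un_le)
    finally have tot: "card {e\<in>E. e \<inter> insert x F \<noteq> {}} \<le> ?a + (card V - Suc (card F))" using b cV by simp
    have cF: "card (insert x F) = Suc (card F)" using insert by simp
    define a where "a = ?a"
    define f where "f = card F"
    define nv where "nv = card V"
    have "2 * card {e\<in>E. e \<inter> insert x F \<noteq> {}} + Suc f * (Suc f + 1) \<le> 2 * (a + (nv - Suc f)) + Suc f * (Suc f + 1)"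
      using tot unfolding a_def f_def nv_def by simp
    also have "\<dots> \<le> 2 * Suc f * nv"
    proof -
      have i1: "2 * a + f * (f + 1) \<le> 2 * f * nv" using IH unfolding a_def f_def nv_def by simp
      have i2: "Suc f \<le> nv" using le unfolding f_def nv_def by simp
      obtain d where d: "nv = Suc f + d" using i2 le_Suc_ex by blast
      have "2 * (a + (nv - Suc f)) + Suc f * (Suc f + 1) = 2 * a + f * (f + 1) + 2 * d + 2 * f + 2"
        using d by (simp add: algebra_simps)
      also have "\<dots> \<le> 2 * f * nv + 2 * d + 2 * f + 2" using i1 by simp
      also have "\<dots> = 2 * Suc f * nv" using d by (simp add: algebra_simps)
      finally show ?thesis .
    qed
    finally show ?case using cF unfolding f_def nv_def by simp
  qed
qed



lemma glue:
  fixes V :: "'a set" and E :: "'a set set"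
  assumes fin: "finite V" and E2: "\<forall>e\<in>E. e \<subseteq> V \<and> card e = 2" and XV: "X \<subseteq> V"
    and sumC: "(\<Sum>C\<in>components V E X. card C div 2) \<le> s'"
    and l2: "2 \<le> l" and t2: "2 \<le> t" and noK: "\<not> contains_Klt V E l t"
  shows "card {e\<in>E. e \<inter> X = {}} \<le> ex_Klt (2 * s' + 1) l t"
proof -
  define comp where "comp v = component V E X v" for v
  define rootC where "rootC C = (SOME u. u \<in> C)" for C :: "'a set"
  define root where "root v = rootC (comp v)" for v
  define W where "W = {v\<in>V - X. v \<noteq> root v}"
  have finW: "finite W" unfolding W_def using fin by simp
  obtain h where h: "bij_betw h W {0..<card W}" using ex_bij_betw_finite_nat[OF finW] by blast
  define f where "f v = (if v \<in> W then h v + 1 else 0)" for v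
  define E0 where "E0 = {e\<in>E. e \<inter> X = {}}"
  define m where "m = 2 * s' + 1"
  have rootC_in: "rootC C \<in> C" if "C \<noteq> {}" for C unfolding rootC_def using that by (simp add: some_in_eq)
  have root_in: "root v \<in> comp v" for v
  proof -
    have "v \<in> comp v" unfolding comp_def by (rule comp_self)
    then have "comp v \<noteq> {}" by auto
    then show ?thesis unfolding root_def by (rule rootC_in)
  qed
  have comp_same: "comp u = comp v" if "u \<in> comp v" for u v
    using that unfolding comp_def by (rule comp_eq)
  have root_same: "root u = root v" if "u \<in> comp v" for u v
    unfolding root_def using comp_same[OF that] by simp
  have comp_sub': "comp v \<subseteq> V - X" if "v \<in> V - X" for v unfolding comp_def using that by (rule comp_sub)
  have F3: "u = v" if "u \<in> V - X" "v \<in> V - X" "f u = f v" "f u \<noteq> 0" for u v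
  proof -
    have "u \<in> W" using that unfolding f_def by (auto split: if_splits)
    moreover have "v \<in> W" using that unfolding f_def by (auto split: if_splits)
    ultimately have "h u = h v" using that(3) unfolding f_def by simp
    moreover have "inj_on h W" using h by (simp add: bij_betw_def)
    ultimately show ?thesis using \<open>u \<in> W\<close> \<open>v \<in> W\<close> by (meson inj_onD)
  qed
  have F4: "u = v" if "u \<in> V - X" "v \<in> V - X" "comp u = comp v" "f u = f v" for u v
  proof (cases "f u = 0")
    case False
    show ?thesis using F3[OF that(1,2,4) False] .
  next
    case True
    then have "u \<notin> W" "v \<notin> W" using that unfolding f_def by (auto split: if_splits)
    then have "u = root u" "v = root v" using that(1,2) unfolding W_def by auto
    moreover have "root u = root v" using that(3) unfolding root_def by simp
    ultimately show ?thesis by simp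
  qed
  have f_bound: "f v \<le> card W" for v
  proof (cases "v \<in> W")
    case True
    then have "h v < card W" using h unfolding bij_betw_def by auto
    then show ?thesis unfolding f_def using True by simp
  next
    case False then show ?thesis unfolding f_def by simp
  qed
  have cW: "card W \<le> 2 * s'"
  proof -
    have Wsub: "W \<subseteq> (\<Union>C\<in>components V E X. C - {rootC C})"
    proof
      fix v assume v: "v \<in> W"
      then have vVX: "v \<in> V - X" and vr: "v \<noteq> root v" unfolding W_def by auto
      have "comp v \<in> components V E X" unfolding components_def comp_def using vVX by (rule imageI)
      moreover have "v \<in> comp v - {rootC (comp v)}" using vr comp_self unfolding root_def comp_def by auto
      ultimately show "v \<in> (\<Union>C\<in>components V E X. C - {rootC C})" by (rule UN_I)
    qed
    have "card W \<le> card (\<Union>C\<in>components V E X. C - {rootC C})"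
    proof (rule card_mono)
      show "finite (\<Union>C\<in>components V E X. C - {rootC C})"
      proof (rule finite_subset[OF _ fin])
        show "(\<Union>C\<in>components V E X. C - {rootC C}) \<subseteq> V"
          using comps_Union[of V E X] by auto
      qed
    qed (rule Wsub)
    also have "\<dots> \<le> (\<Sum>C\<in>components V E X. card (C - {rootC C}))"
      using comps_finite[OF fin] by (rule card_UN_le)
    also have "\<dots> \<le> (\<Sum>C\<in>components V E X. 2 * (card C div 2))"
    proof (rule sum_mono)
      fix C assume C: "C \<in> components V E X"
      then obtain w where "C = component V E X w" unfolding components_def by auto
      then have "w \<in> C" using comp_self by simp
      then have "rootC C \<in> C" using rootC_in by auto
      then have "card (C - {rootC C}) \<le> card C - 1" by (cases "finite C") (auto simp: card_Diff_singleton_if)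
      also have "\<dots> \<le> 2 * (card C div 2)" by simp
      finally show "card (C - {rootC C}) \<le> 2 * (card C div 2)" .
    qed
    also have "\<dots> = 2 * (\<Sum>C\<in>components V E X. card C div 2)" by (simp add: sum_distrib_left)
    also have "\<dots> \<le> 2 * s'" using sumC by simp
    finally show ?thesis .
  qed
  have E0_prop: "e \<in> E \<and> e \<subseteq> V - X \<and> card e = 2" if "e \<in> E0" for e
    using that E2 unfolding E0_def by auto
  have edge_comp: "comp x = comp y" if e: "e \<in> E0" and xy: "x \<in> e" "y \<in> e" for e x y
  proof -
    have ep: "e \<in> E" "e \<subseteq> V - X" "card e = 2" using E0_prop[OF e] by auto
    then obtain a b where ab: "e = {a,b}" by (metis card_2_iff)
    have "{a,b} \<in> E" "a \<in> V - X" "b \<in> V - X" using ep ab by auto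
    then have "comp b = comp a" unfolding comp_def by (rule comp_edge_eq)
    then show ?thesis using xy ab by auto
  qed
  have in_comp: "x \<in> comp x" for x unfolding comp_def by (rule comp_self)
  have f_two: "card (f ` e) = 2 \<and> (\<exists>x\<in>e. f x \<noteq> 0)" if e: "e \<in> E0" for e
  proof -
    have ep: "e \<in> E" "e \<subseteq> V - X" "card e = 2" using E0_prop[OF e] by auto
    then obtain a b where ab: "e = {a,b}" "a \<noteq> b" by (metis card_2_iff)
    have "comp a = comp b" using edge_comp[OF e] ab by simp
    moreover have "a \<in> V - X" "b \<in> V - X" using ep ab by auto
    ultimately have "f a \<noteq> f b" using F4 ab(2) by blast
    then show ?thesis using ab by auto
  qed
  have pull: "e = {v \<in> comp x. f v \<in> f ` e}" if e: "e \<in> E0" and x: "x \<in> e" for e x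
  proof
    show "e \<subseteq> {v \<in> comp x. f v \<in> f ` e}"
    proof
      fix v assume v: "v \<in> e"
      have "comp v = comp x" using edge_comp[OF e v x] .
      then show "v \<in> {v \<in> comp x. f v \<in> f ` e}" using in_comp[of v] v by auto
    qed
    show "{v \<in> comp x. f v \<in> f ` e} \<subseteq> e"
    proof
      fix v assume v: "v \<in> {v \<in> comp x. f v \<in> f ` e}"
      then obtain y where y: "y \<in> e" "f v = f y" by auto
      have xVX: "x \<in> V - X" using E0_prop[OF e] x by auto
      have vVX: "v \<in> V - X" using v comp_sub'[OF xVX] by auto
      have yVX: "y \<in> V - X" using E0_prop[OF e] y by auto
      have "comp v = comp x" using v comp_same by auto
      moreover have "comp y = comp x" using edge_comp[OF e y(1) x] .
      ultimately have "v = y" using F4[OF vVX yVX _ y(2)] by simp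
      then show "v \<in> e" using y by simp
    qed
  qed
  define H where "H = (\<lambda>e. f ` e) ` E0"
  have injH: "inj_on (\<lambda>e. f ` e) E0"
  proof (rule inj_onI)
    fix e e' assume e: "e \<in> E0" and e': "e' \<in> E0" and eq: "f ` e = f ` e'"
    obtain x where x: "x \<in> e" "f x \<noteq> 0" using f_two[OF e] by auto
    have "f x \<in> f ` e'" using eq x by auto
    then obtain y where y: "y \<in> e'" "f y = f x" by auto
    have "x \<in> V - X" "y \<in> V - X" using E0_prop[OF e] E0_prop[OF e'] x y by auto
    then have "x = y" using F3 y(2) x(2) by metis
    then show "e = e'" using pull[OF e x(1)] pull[OF e' y(1)] eq by simp
  qed
  have cH: "card H = card E0" unfolding H_def using injH by (rule card_image)
  have fb2: "f v \<le> 2 * s'" for v using f_bound[of v] cW by linarith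
  have simpleH: "simple_graph {0..<m} H"
    unfolding simple_graph_def
  proof (intro conjI ballI)
    show "finite {0..<m}" by simp
    fix g assume "g \<in> H"
    then obtain e where e: "e \<in> E0" and g: "g = f ` e" unfolding H_def by auto
    show "g \<subseteq> {0..<m}" unfolding g m_def using fb2 by (auto simp: less_Suc_eq_le)
    show "card g = 2" using f_two[OF e] g by simp
  qed
  have noKH: "\<not> contains_Klt {0..<m} H l t"
  proof
    assume "contains_Klt {0..<m} H l t"
    then obtain A B where AB: "A \<subseteq> {0..<m}" "B \<subseteq> {0..<m}" "A \<inter> B = {}" "card A = l" "card B = t"
      and AH: "\<forall>a\<in>A. \<forall>b\<in>B. {a, b} \<in> H" unfolding contains_Klt_def by blast
    have finA: "finite A" by (rule finite_subset[OF AB(1)]) simp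
    have finB: "finite B" by (rule finite_subset[OF AB(2)]) simp
    obtain a0 where a0: "a0 \<in> A" "a0 \<noteq> 0" using exists_other[OF finA, of 0] AB(4) l2 by auto
    obtain b0 where b0: "b0 \<in> B" "b0 \<noteq> 0" using exists_other[OF finB, of 0] AB(5) t2 by auto
    have hmem: "\<exists>e\<in>E0. f ` e = {a,b}" if "a \<in> A" "b \<in> B" for a b
    proof -
      have "{a,b} \<in> H" using AH that by simp
      then obtain e where "e \<in> E0" "{a,b} = f ` e" unfolding H_def by (rule imageE)
      then show ?thesis by auto
    qed
    have img1: "\<exists>v\<in>e. f v = p" if "f ` e = {p,q}" for e p q
    proof -
      have "p \<in> f ` e" using that by simp
      then show ?thesis by (auto simp: image_iff)
    qed
    have img2: "\<exists>v\<in>e. f v = q" if "f ` e = {p,q}" for e p q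
    proof -
      have "q \<in> f ` e" using that by simp
      then show ?thesis by (auto simp: image_iff)
    qed
    have VX: "x \<in> V - X" if "e \<in> E0" "x \<in> e" for e x using E0_prop[OF that(1)] that(2) by auto
    obtain e00 where e00: "e00 \<in> E0" "f ` e00 = {a0,b0}" using hmem[OF a0(1) b0(1)] by blast
    obtain v0 where v0: "v0 \<in> e00" "f v0 = b0" using img2[OF e00(2)] by blast
    obtain u0 where u0: "u0 \<in> e00" "f u0 = a0" using img1[OF e00(2)] by blast
    define C where "C = comp v0"
    have v0VX: "v0 \<in> V - X" using VX[OF e00(1) v0(1)] .
    have CVX: "C \<subseteq> V - X" unfolding C_def using comp_sub'[OF v0VX] .
    have compC: "comp v = C" if "v \<in> C" for v using that comp_same unfolding C_def by simp
    have covA: "\<exists>v\<in>C. f v = x" if x: "x \<in> A" for x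
    proof -
      obtain e where e: "e \<in> E0" "f ` e = {x,b0}" using hmem[OF x b0(1)] by blast
      obtain v where v: "v \<in> e" "f v = b0" using img2[OF e(2)] by blast
      obtain u where u: "u \<in> e" "f u = x" using img1[OF e(2)] by blast
      have "v = v0" using F3[OF VX[OF e(1) v(1)] v0VX] v(2) v0(2) b0(2) by simp
      then have "comp u = C" using edge_comp[OF e(1) u(1) v(1)] unfolding C_def by simp
      then show ?thesis using u in_comp[of u] by auto
    qed
    have covB: "\<exists>v\<in>C. f v = x" if x: "x \<in> B" for x
    proof -
      obtain e where e: "e \<in> E0" "f ` e = {a0,x}" using hmem[OF a0(1) x] by blast
      obtain w where w: "w \<in> e" "f w = x" using img2[OF e(2)] by blast
      obtain u where u: "u \<in> e" "f u = a0" using img1[OF e(2)] by blast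
      have "u = u0" using F3[OF VX[OF e(1) u(1)] VX[OF e00(1) u0(1)]] u(2) u0(2) a0(2) by simp
      then have "comp u = C" using edge_comp[OF e00(1) u0(1) v0(1)] unfolding C_def by simp
      then have "comp w = C" using edge_comp[OF e(1) w(1) u(1)] by simp
      then show ?thesis using w in_comp[of w] by auto
    qed
    have injC: "inj_on f C"
    proof (rule inj_onI)
      fix x y assume "x \<in> C" "y \<in> C" "f x = f y"
      then show "x = y" using F4[of x y] CVX compC by auto
    qed
    define A' where "A' = {v\<in>C. f v \<in> A}"
    define B' where "B' = {v\<in>C. f v \<in> B}"
    have fA: "f ` A' = A"
    proof
      show "f ` A' \<subseteq> A" unfolding A'_def by auto
      show "A \<subseteq> f ` A'"
      proof
        fix x assume x: "x \<in> A"
        then obtain v where "v \<in> C" "f v = x" using covA by blast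
        then show "x \<in> f ` A'" unfolding A'_def using x by (auto simp: image_iff)
      qed
    qed
    have fB: "f ` B' = B"
    proof
      show "f ` B' \<subseteq> B" unfolding B'_def by auto
      show "B \<subseteq> f ` B'"
      proof
        fix x assume x: "x \<in> B"
        then obtain v where "v \<in> C" "f v = x" using covB by blast
        then show "x \<in> f ` B'" unfolding B'_def using x by (auto simp: image_iff)
      qed
    qed
    have cA: "card A' = l"
    proof -
      have "inj_on f A'" using injC unfolding A'_def by (rule inj_on_subset) auto
      then have "card (f ` A') = card A'" by (rule card_image)
      then show ?thesis using fA AB(4) by simp
    qed
    have cB: "card B' = t"
    proof -
      have "inj_on f B'" using injC unfolding B'_def by (rule inj_on_subset) auto
      then have "card (f ` B') = card B'" by (rule card_image)
      then show ?thesis using fB AB(5) by simp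
    qed
    have disj: "A' \<inter> B' = {}" unfolding A'_def B'_def using AB(3) by auto
    have edges: "{a, b} \<in> E" if a: "a \<in> A'" and b: "b \<in> B'" for a b
    proof -
      have aC: "a \<in> C" and bC: "b \<in> C" using a b unfolding A'_def B'_def by auto
      have "{f a, f b} \<in> H" using AH a b unfolding A'_def B'_def by auto
      then obtain e where e: "e \<in> E0" "f ` e = {f a, f b}" unfolding H_def by auto
      obtain x where x: "x \<in> e" "f x \<noteq> 0" using f_two[OF e(1)] by auto
      have "f x \<in> {f a, f b}" using e(2) x(1) by auto
      then have "x = a \<or> x = b"
        using F3[OF VX[OF e(1) x(1)], of a] F3[OF VX[OF e(1) x(1)], of b] aC bC CVX x(2) by auto
      then have xC: "x \<in> C" using aC bC by auto
      have "e = {v \<in> comp x. f v \<in> f ` e}" using pull[OF e(1) x(1)] .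
      also have "\<dots> = {v \<in> C. f v = f a \<or> f v = f b}" using compC[OF xC] e(2) by auto
      also have "\<dots> = {a, b}"
        using aC bC injC unfolding inj_on_def by auto
      finally have "e = {a,b}" .
      then show ?thesis using E0_prop[OF e(1)] by simp
    qed
    have "A' \<subseteq> V" "B' \<subseteq> V" using CVX unfolding A'_def B'_def by auto
    then have "contains_Klt V E l t" unfolding contains_Klt_def
      using cA cB disj edges by (intro exI[of _ A'] exI[of _ B']) simp
    then show False using noK by simp
  qed
  have finS: "finite {card E | E. simple_graph {0..<m} E \<and> \<not> contains_Klt {0..<m} E l t}"
  proof -
    have "{card E | E. simple_graph {0..<m} E \<and> \<not> contains_Klt {0..<m} E l t} \<subseteq> card ` Pow (Pow {0..<m})"
      unfolding simple_graph_def by auto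
    then show ?thesis by (meson finite_Pow_iff finite_atLeastLessThan finite_imageI finite_subset)
  qed
  have "card H \<le> ex_Klt m l t" unfolding ex_Klt_def
    using simpleH noKH by (intro Max_ge[OF finS]) blast
  then show ?thesis using cH unfolding E0_def m_def by simp
qed



theorem lemma3p2:
  fixes l t s n :: nat and E :: "nat set set"
  assumes "n \<ge> 2 * s + 1" and "2 \<le> l" and "l \<le> t" and "s \<ge> l + 1"
    and "simple_graph {0..<n} E"
    and "\<not> contains_Klt {0..<n} E l t"
    and "\<not> contains_matching E (s + 1)"
    and "xG {0..<n} E s = l - 1"
  shows "int (card E) \<le> int (l - 1) * int n + int (ex_Klt (2 * (s - l + 1) + 1) l t)
                          - int (l * (l - 1) div 2)"
proof -
  define V where "V = {0..<n}"
  have fin: "finite V" unfolding V_def by simp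
  have E2: "\<forall>e\<in>E. e \<subseteq> V \<and> card e = 2" using assms(5) unfolding simple_graph_def V_def by auto
  have E2': "\<forall>e\<in>E. card e = 2" using E2 by auto
  have finE: "finite E"
  proof -
    have "E \<subseteq> Pow V" using E2 by auto
    then show ?thesis using fin by (meson finite_Pow_iff finite_subset)
  qed
  have nu_le: "nu V E \<le> s"
  proof (rule ccontr)
    assume "\<not> nu V E \<le> s"
    then have ge: "s + 1 \<le> nu V E" by simp
    obtain M where M: "matching V E M" "card M = nu V E" using nu_attained[OF fin] by blast
    have finM: "finite M" using matching_finite[OF fin M(1)] .
    obtain M' where M': "M' \<subseteq> M" "card M' = s + 1"
      using obtain_subset_with_card_n[of "s+1" M] ge M(2) by metis
    have "finite M'" using finM M'(1) by (rule finite_subset[rotated])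
    have pw: "\<forall>e\<in>M'. \<forall>f\<in>M'. e \<noteq> f \<longrightarrow> e \<inter> f = {}"
    proof (intro ballI impI)
      fix e f assume "e \<in> M'" "f \<in> M'" "e \<noteq> f"
      then have "e \<in> M" "f \<in> M" using M'(1) by auto
      then show "e \<inter> f = {}" using M(1) \<open>e \<noteq> f\<close> unfolding matching_def by simp
    qed
    have "M' \<subseteq> E" using M'(1) M(1) unfolding matching_def by (meson order_trans)
    then have "contains_matching E (s + 1)" unfolding contains_matching_def
      using pw M'(2) \<open>finite M'\<close> by (intro exI[of _ M']) simp
    then show False using assms(7) by simp
  qed
  obtain X0 where X0: "X0 \<subseteq> V" "card X0 + (\<Sum>C\<in>components V E X0. card C div 2) \<le> nu V E"
    using TB[OF fin E2'] by blast
  have adm0: "admissible V E s X0" unfolding admissible_def using X0 nu_le by simp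
  define S where "S = {card X | X. admissible V E s X}"
  have Sne: "S \<noteq> {}" unfolding S_def using adm0 by blast
  have Sfin: "finite S"
  proof -
    have "S \<subseteq> {..card V}" unfolding S_def admissible_def using card_mono[OF fin] by auto
    then show ?thesis by (rule finite_subset) simp
  qed
  have "Max S \<in> S" using Sfin Sne by (rule Max_in)
  moreover have "Max S = l - 1" using assms(8) unfolding xG_def S_def V_def by simp
  ultimately obtain X where adm: "admissible V E s X" and cX: "card X = l - 1" unfolding S_def by auto
  have XV: "X \<subseteq> V" and sumX: "card X + (\<Sum>C\<in>components V E X. card C div 2) \<le> s"
    using adm unfolding admissible_def by auto
  have sumC: "(\<Sum>C\<in>components V E X. card C div 2) \<le> s - l + 1" using sumX cX assms(2,4) by simp
  have t2: "2 \<le> t" using assms(2,3) by simp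
  have noK: "\<not> contains_Klt V E l t" using assms(6) unfolding V_def .
  have g: "card {e\<in>E. e \<inter> X = {}} \<le> ex_Klt (2 * (s - l + 1) + 1) l t"
    using glue[OF fin E2 XV sumC assms(2) t2 noK] .
  have em: "2 * card {e\<in>E. e \<inter> X \<noteq> {}} + card X * (card X + 1) \<le> 2 * card X * card V"
    using edges_meet[OF fin E2 XV] .
  have split: "card E = card {e\<in>E. e \<inter> X = {}} + card {e\<in>E. e \<inter> X \<noteq> {}}"
  proof -
    have "E = {e\<in>E. e \<inter> X = {}} \<union> {e\<in>E. e \<inter> X \<noteq> {}}" by auto
    then have "card E = card ({e\<in>E. e \<inter> X = {}} \<union> {e\<in>E. e \<inter> X \<noteq> {}})" by simp
    also have "\<dots> = card {e\<in>E. e \<inter> X = {}} + card {e\<in>E. e \<inter> X \<noteq> {}}"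
      using finE by (intro card_Un_disjoint) auto
    finally show ?thesis .
  qed
  define a where "a = card {e\<in>E. e \<inter> X \<noteq> {}}"
  define b where "b = card {e\<in>E. e \<inter> X = {}}"
  define k where "k = l - 1"
  have cV: "card V = n" unfolding V_def by simp
  have lk: "l = k + 1" unfolding k_def using assms(2) by simp
  have "even (k * (k + 1))" by simp
  then have "even (l * (l - 1))" using lk by (simp add: mult.commute)
  then have ev: "l * (l - 1) div 2 * 2 = l * (l - 1)" by simp
  have em': "2 * a + k * (k + 1) \<le> 2 * k * n" using em cX cV unfolding a_def k_def by simp
  have "int (card E) = int b + int a" using split unfolding a_def b_def by simp
  moreover have "2 * int a + int (l * (l - 1)) \<le> 2 * int k * int n"
  proof -
    have "int (2 * a + k * (k + 1)) \<le> int (2 * k * n)" using em' by (simp only: of_nat_le_iff)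
    moreover have "l * (l - 1) = k * (k + 1)" using lk by simp
    ultimately show ?thesis by simp
  qed
  moreover have "int (l * (l - 1)) = 2 * int (l * (l - 1) div 2)"
    using ev by (metis mult.commute of_nat_mult of_nat_numeral)
  moreover have "int b \<le> int (ex_Klt (2 * (s - l + 1) + 1) l t)" using g unfolding b_def by simp
  ultimately show ?thesis unfolding k_def by linarith
qed


end
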